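(* Let $X$ have a pdf $f$ satisfying Conditions (A) and (B) below, and fix the uniform quantizer $Q_{\mathrm{uni}}^\delta$. Then the zero-wait sampler is asymptotically optimal: $$\lim_{\delta\to0}\Big[\mathrm{AoI}(S_{\mathrm z},Q_{\mathrm{uni}}^\delta,F^* )-\inf_S\mathrm{AoI}(S,Q_{\mathrm{uni}}^\delta,F^* )\Big]=0,$$ where the infimum is over all stationary deterministic sampling policies $S$.
   Context: Let $X$ be a real random variable with pdf $f$. Condition (A): $f$ is continuous and differentiable, and its support is a bounded interval $I$. Let $M=\max f$. Condition (B): $\int_I f\log_2^2 f\,dx$ and $-\int_I f\log_2 f\,dx$ exist and are finite. Quantizer. The uniform quantizer $Q_{\mathrm{uni}}^\delta$ partitions $I$ into consecutive cells of length $\delta$, with midpoint representation points. Let $p_i$ be the probability that $X$ lies in cell $i$. Codes. A real-valued code assigns lengths $l_i\in\mathbb R^+$ to the cells, subject to $\sum_i2^{-l_i}\le1$. The random codeword length is $L=l_i$ when $X$ is in cell $i$. Sampling policies. A stationary deterministic sampling policy $S$ is a measurable function $z:[0,\infty)\to[0,W]$, for some fixed $W$, which determines the waiting time $Z=z(L)$. The zero-wait policy $S_{\mathrm z}$ has $z\equiv0$. Objective. The AoI is $\mathrm{AoI}(S,Q,l)=\frac{E[(L+Z)^2]}{2E[L+Z]}+E[L]$, and $\mathrm{AoI}(S,Q,F^* )=\inf_l\mathrm{AoI}(S,Q,l)$, the infimum over real-valued codes. *)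

theory Defs
  imports "HOL-Analysis.Analysis"
begin

definition num_cells :: "real \<Rightarrow> real \<Rightarrow> real \<Rightarrow> nat" where
  "num_cells a b d = nat \<lceil>(b - a) / d\<rceil>"

definition cell_prob :: "(real \<Rightarrow> real) \<Rightarrow> real \<Rightarrow> real \<Rightarrow> real \<Rightarrow> nat \<Rightarrow> real" where
  "cell_prob f a b d i = integral {a + real i * d .. min b (a + real (Suc i) * d)} f"

definition real_codes :: "nat \<Rightarrow> (nat \<Rightarrow> real) set" where
  "real_codes N = {l. (\<forall>i<N. 0 < l i) \<and> (\<Sum>i<N. 2 powr (- l i)) \<le> 1}"

definition sampling_policies :: "real \<Rightarrow> (real \<Rightarrow> real) set" where
  "sampling_policies W = {z. z \<in> borel_measurable borel \<and> (\<forall>x\<ge>0. 0 \<le> z x \<and> z x \<le> W)}"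

text \<open>AoI(S,Q,l) = E[(L+Z)^2] / (2 E[L+Z]) + E[L], with L = l_i w.p. p_i and Z = z(L).\<close>
definition AoI :: "(nat \<Rightarrow> real) \<Rightarrow> nat \<Rightarrow> (real \<Rightarrow> real) \<Rightarrow> (nat \<Rightarrow> real) \<Rightarrow> real" where
  "AoI p N z l =
     (\<Sum>i<N. p i * (l i + z (l i))^2) / (2 * (\<Sum>i<N. p i * (l i + z (l i))))
     + (\<Sum>i<N. p i * l i)"

text \<open>AoI(S,Q,F*) = inf over real-valued codes.\<close>
definition AoI_opt :: "(nat \<Rightarrow> real) \<Rightarrow> nat \<Rightarrow> (real \<Rightarrow> real) \<Rightarrow> real" where
  "AoI_opt p N z = (INF l \<in> real_codes N. AoI p N z l)"

definition AoI_uni :: "(real \<Rightarrow> real) \<Rightarrow> real \<Rightarrow> real \<Rightarrow> real \<Rightarrow> (real \<Rightarrow> real) \<Rightarrow> real" where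
  "AoI_uni f a b d z = AoI_opt (cell_prob f a b d) (num_cells a b d) z"

end

theory Submission imports Defs "HOL-Real_Asymp.Real_Asymp" begin

lemma xlog_bound: fixes x :: real assumes "0 < x" shows "x * (ln x)^2 \<le> 4 + x^3"
proof (cases "x \<le> 1")
  case True
  have s: "0 < sqrt x" using assms by simp
  have "ln (1 / sqrt x) \<le> 1 / sqrt x - 1" using s by (intro ln_le_minus_one) simp
  moreover have "ln (1 / sqrt x) = - ln x / 2" using assms by (simp add: ln_div ln_sqrt)
  ultimately have h: "- ln x \<le> 2 / sqrt x" by (simp add: field_simps)
  have h0: "0 \<le> - ln x" using True assms by simp
  have "(ln x)^2 = (- ln x)^2" by simp
  also have "\<dots> \<le> (2 / sqrt x)^2" using h h0 by (intro power_mono) auto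
  also have "\<dots> = 4 / x" using assms by (simp add: power_divide)
  finally have "x * (ln x)^2 \<le> x * (4 / x)" using assms by (intro mult_left_mono) auto
  also have "\<dots> = 4" using assms by simp
  finally show ?thesis using assms by (smt (verit) zero_le_power)
next
  case False
  have h0: "0 \<le> ln x" using False by simp
  have "ln x \<le> x - 1" using assms by (intro ln_le_minus_one)
  hence "(ln x)^2 \<le> x^2" using h0 by (intro power_mono) auto
  hence "x * (ln x)^2 \<le> x * x^2" using assms by (intro mult_left_mono) auto
  thus ?thesis by (simp add: power3_eq_cube power2_eq_square)
qed

lemma gibbs:
  assumes pos: "\<forall>i<N. 0 < p i" and s1: "(\<Sum>i<N. p i) = 1" and l: "l \<in> real_codes N"
  shows "(\<Sum>i<N. p i * (- log 2 (p i))) \<le> (\<Sum>i<N. p i * l i)"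
proof -
  have kr: "(\<Sum>i<N. 2 powr (- l i)) \<le> 1" using l by (simp add: real_codes_def)
  have t: "(p i - 2 powr (- l i)) / ln 2 \<le> p i * l i - p i * (- log 2 (p i))" if "i < N" for i
  proof -
    have pi: "0 < p i" using pos that by auto
    let ?q = "2 powr (- l i)"
    have q: "0 < ?q" by simp
    have "ln (?q / p i) \<le> ?q / p i - 1" using q pi by (intro ln_le_minus_one) simp
    moreover have "ln (?q / p i) = - l i * ln 2 - ln (p i)" using q pi by (simp add: ln_div ln_powr)
    ultimately have "- l i * ln 2 - ln (p i) \<le> ?q / p i - 1" by simp
    hence "p i * (- l i * ln 2 - ln (p i)) \<le> p i * (?q / p i - 1)" using pi by (intro mult_left_mono) auto
    moreover have "p i * (?q / p i - 1) = ?q - p i" using pi by (simp add: field_simps)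
    ultimately have "p i * (- l i * ln 2 - ln (p i)) \<le> ?q - p i" by simp
    hence "(p i - ?q) \<le> p i * (l i * ln 2 + ln (p i))" by (simp add: algebra_simps)
    hence "(p i - ?q) / ln 2 \<le> p i * (l i * ln 2 + ln (p i)) / ln 2" by (simp add: divide_right_mono)
    also have "\<dots> = p i * l i - p i * (- log 2 (p i))" by (simp add: log_def field_simps)
    finally show ?thesis .
  qed
  have "(\<Sum>i<N. (p i - 2 powr (- l i)) / ln 2) \<le> (\<Sum>i<N. p i * l i - p i * (- log 2 (p i)))"
    using t by (intro sum_mono) auto
  moreover have "(\<Sum>i<N. (p i - 2 powr (- l i)) / ln 2) = (1 - (\<Sum>i<N. 2 powr (- l i))) / ln 2"
    using s1 by (simp add: sum_divide_distrib[symmetric] sum_subtractf)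
  moreover have "0 \<le> (1 - (\<Sum>i<N. 2 powr (- l i))) / ln 2" using kr by simp
  moreover have "(\<Sum>i<N. p i * l i - p i * (- log 2 (p i))) = (\<Sum>i<N. p i * l i) - (\<Sum>i<N. p i * (- log 2 (p i)))" by (rule sum_subtractf)
  ultimately show ?thesis by linarith
qed

lemma lower_aoi:
  assumes pos: "\<forall>i<N. 0 < p i" and s1: "(\<Sum>i<N. p i) = 1" and l: "l \<in> real_codes N"
    and z: "z \<in> sampling_policies W"
  shows "3/2 * (\<Sum>i<N. p i * l i) \<le> AoI p N z l"
proof -
  define Y where "Y i = l i + z (l i)" for i
  have lp: "\<forall>i<N. 0 < l i" using l by (simp add: real_codes_def)
  have zp: "\<forall>i<N. 0 \<le> z (l i)" using z lp by (auto simp: sampling_policies_def less_imp_le)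
  have Yl: "\<forall>i<N. l i \<le> Y i" using zp by (simp add: Y_def)
  have N0: "N \<noteq> 0" using s1 by (metis lessThan_0 sum.empty zero_neq_one)
  have EL: "(\<Sum>i<N. p i * l i) \<le> (\<Sum>i<N. p i * Y i)"
    using Yl pos by (intro sum_mono mult_left_mono) (auto simp: less_imp_le)
  have ELp: "0 < (\<Sum>i<N. p i * l i)"
    using N0 pos lp by (intro sum_pos) auto
  define S1 where "S1 = (\<Sum>i<N. p i * Y i)"
  define S2 where "S2 = (\<Sum>i<N. p i * (Y i)^2)"
  have S1p: "0 < S1" using EL ELp S1_def by linarith
  have "0 \<le> (\<Sum>i<N. p i * (Y i - S1)^2)" using pos by (intro sum_nonneg) (auto simp: less_imp_le)
  also have "(\<Sum>i<N. p i * (Y i - S1)^2) = (\<Sum>i<N. p i * (Y i)^2 - 2 * S1 * (p i * Y i) + S1^2 * p i)"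
    by (intro sum.cong) (auto simp: power2_eq_square algebra_simps)
  also have "\<dots> = (\<Sum>i<N. p i * (Y i)^2) - 2 * S1 * (\<Sum>i<N. p i * Y i) + S1^2 * (\<Sum>i<N. p i)"
    by (simp add: sum.distrib sum_subtractf sum_distrib_left)
  also have "\<dots> = S2 - 2 * S1 * S1 + S1^2 * (\<Sum>i<N. p i)" by (simp add: S1_def S2_def)
  finally have "S1^2 \<le> S2" using s1 by (simp add: power2_eq_square)
  hence "S1 / 2 \<le> S2 / (2 * S1)" using S1p by (simp add: field_simps power2_eq_square)
  moreover have "AoI p N z l = S2 / (2 * S1) + (\<Sum>i<N. p i * l i)"
    by (simp add: AoI_def S1_def S2_def Y_def)
  ultimately show ?thesis using EL S1_def by linarith
qed


definition ent :: "(nat \<Rightarrow> real) \<Rightarrow> nat \<Rightarrow> real" where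
  "ent p N = (\<Sum>i<N. p i * (- log 2 (p i)))"

lemma code_in:
  assumes pos: "\<forall>i<N. 0 < p i" and s1: "(\<Sum>i<N. p i) = 1" and d: "0 < d"
  shows "(\<lambda>i. d - log 2 (p i)) \<in> real_codes N"
proof -
  have p1: "p i \<le> 1" if "i < N" for i
  proof -
    have "p i \<le> (\<Sum>i<N. p i)" using pos that by (intro member_le_sum) (auto simp: less_imp_le)
    thus ?thesis using s1 by simp
  qed
  have "0 < d - log 2 (p i)" if "i < N" for i
  proof -
    have "log 2 (p i) \<le> 0" using p1[OF that] pos that by simp
    thus ?thesis using d by linarith
  qed
  moreover have "(\<Sum>i<N. 2 powr (- (d - log 2 (p i)))) = (\<Sum>i<N. 2 powr (- d) * p i)"
  proof (intro sum.cong refl)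
    fix x assume "x \<in> {..<N}"
    hence px: "0 < p x" using pos by auto
    have "2 powr (- (d - log 2 (p x))) = 2 powr (log 2 (p x)) * 2 powr (-d)" by (simp add: powr_add[symmetric])
    thus "2 powr (- (d - log 2 (p x))) = 2 powr (- d) * p x" using px by simp
  qed
  moreover have "(\<Sum>i<N. 2 powr (- d) * p i) = 2 powr (-d)" using s1 by (simp add: sum_distrib_left[symmetric])
  moreover have "2 powr (-d) \<le> 2 powr 0" by (rule powr_mono) (use d in auto)
  ultimately show ?thesis by (simp add: real_codes_def)
qed

lemma upper_aoi:
  assumes pos: "\<forall>i<N. 0 < p i" and s1: "(\<Sum>i<N. p i) = 1" and d: "0 < d" and H: "0 < ent p N"
  shows "AoI p N (\<lambda>_. 0) (\<lambda>i. d - log 2 (p i)) \<le> 3/2 * (d + ent p N)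
           + (\<Sum>i<N. p i * (log 2 (p i / d))^2) / (2 * ent p N)"
proof -
  define l where "l i = d - log 2 (p i)" for i
  define E where "E = (\<Sum>i<N. p i * l i)"
  define E2 where "E2 = (\<Sum>i<N. p i * (l i)^2)"
  define V where "V = (\<Sum>i<N. p i * (log 2 (p i / d))^2)"
  define m where "m = d - log 2 d"
  have E: "E = d + ent p N"
  proof -
    have "E = (\<Sum>i<N. d * p i + p i * (- log 2 (p i)))" unfolding E_def l_def
      by (intro sum.cong) (auto simp: algebra_simps)
    also have "\<dots> = (\<Sum>i<N. d * p i) + (\<Sum>i<N. p i * (- log 2 (p i)))" by (rule sum.distrib)
    also have "(\<Sum>i<N. d * p i) = d" using s1 by (simp add: sum_distrib_left[symmetric])
    also have "(\<Sum>i<N. p i * (- log 2 (p i))) = ent p N" by (simp add: ent_def)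
    finally show ?thesis .
  qed
  have V: "V = (\<Sum>i<N. p i * (l i - m)^2)" unfolding V_def
  proof (intro sum.cong refl)
    fix i assume "i \<in> {..<N}"
    hence "0 < p i" using pos by auto
    hence "log 2 (p i / d) = log 2 (p i) - log 2 d" using d by (simp add: log_divide)
    hence "l i - m = - log 2 (p i / d)" by (simp add: l_def m_def)
    thus "p i * (log 2 (p i / d))\<^sup>2 = p i * (l i - m)\<^sup>2" by simp
  qed
  also have "\<dots> = (\<Sum>i<N. p i * (l i)^2 - 2 * m * (p i * l i) + m^2 * p i)"
    by (intro sum.cong) (auto simp: power2_eq_square algebra_simps)
  also have "\<dots> = E2 - 2 * m * E + m^2" using s1
    by (simp add: sum.distrib sum_subtractf sum_distrib_left[symmetric] E_def E2_def)
  finally have "V = E2 - 2 * m * E + m^2" .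
  hence E2: "E2 \<le> E^2 + V" by (smt (verit) power2_eq_square sum_squares_ge_zero zero_le_power2 power2_diff)
  have Ep: "0 < E" using E H d by simp
  have "AoI p N (\<lambda>_. 0) l = E2 / (2 * E) + E" by (simp add: AoI_def E_def E2_def)
  also have "\<dots> \<le> (E^2 + V) / (2 * E) + E" using E2 Ep by (simp add: divide_right_mono)
  also have "\<dots> = 3/2 * E + V / (2 * E)" using Ep by (simp add: field_simps power2_eq_square)
  also have "V / (2 * E) \<le> V / (2 * ent p N)"
  proof -
    have "0 \<le> V" unfolding V_def using pos by (intro sum_nonneg) (auto simp: less_imp_le)
    thus ?thesis using E H d by (intro divide_left_mono) auto
  qed
  moreover have ldef: "l = (\<lambda>i. d - log 2 (p i))" by (simp add: l_def fun_eq_iff)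
  ultimately show ?thesis by (simp add: E V_def)
qed

lemma V_bound:
  assumes pos: "\<forall>i<N. 0 < p i" and pM: "\<forall>i<N. p i \<le> M * d" and d: "0 < d"
  shows "(\<Sum>i<N. p i * (log 2 (p i / d))^2) \<le> real N * d * ((4 + M^3) / (ln 2)^2)"
proof -
  have "p i * (log 2 (p i / d))^2 \<le> d * ((4 + M^3) / (ln 2)^2)" if "i < N" for i
  proof -
    define r where "r = p i / d"
    have r: "0 < r" "r \<le> M" using pos pM that d by (auto simp: r_def field_simps)
    have pr: "p i = d * r" using d by (simp add: r_def)
    have "r * (ln r)^2 \<le> 4 + M^3" using xlog_bound[OF r(1)] power_mono[OF r(2), of 3] r by linarith
    hence "r * (ln r)^2 / (ln 2)^2 \<le> (4 + M^3) / (ln 2)^2" by (simp add: divide_right_mono)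
    hence "d * (r * (ln r)^2 / (ln 2)^2) \<le> d * ((4 + M^3) / (ln 2)^2)" using d by (intro mult_left_mono) auto
    moreover have "p i * (log 2 (p i / d))^2 = d * (r * (ln r)^2 / (ln 2)^2)"
      by (simp add: pr log_def r_def[symmetric] power_divide)
    ultimately show ?thesis by simp
  qed
  hence "(\<Sum>i<N. p i * (log 2 (p i / d))^2) \<le> (\<Sum>i<N. d * ((4 + M^3) / (ln 2)^2))" by (intro sum_mono) auto
  thus ?thesis by simp
qed

lemma ent_lower:
  assumes pos: "\<forall>i<N. 0 < p i" and s1: "(\<Sum>i<N. p i) = 1" and pM: "\<forall>i<N. p i \<le> M * d"
  shows "- log 2 (M * d) \<le> ent p N"
proof -
  have "(\<Sum>i<N. p i * (- log 2 (M * d))) \<le> ent p N" unfolding ent_def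
  proof (intro sum_mono)
    fix i assume "i \<in> {..<N}"
    hence "0 < p i" "p i \<le> M * d" using pos pM by auto
    hence "log 2 (p i) \<le> log 2 (M * d)" by simp
    thus "p i * - log 2 (M * d) \<le> p i * - log 2 (p i)" using \<open>0 < p i\<close> by (intro mult_left_mono) auto
  qed
  moreover have "(\<Sum>i<N. p i * (- log 2 (M*d))) = (\<Sum>i<N. p i) * (- log 2 (M*d))" by (rule sum_distrib_right[symmetric])
  ultimately show ?thesis using s1 by simp
qed


lemma zero_policy: "0 \<le> W \<Longrightarrow> (\<lambda>_. 0) \<in> sampling_policies W"
  by (simp add: sampling_policies_def)

lemma abstract:
  assumes pos: "\<forall>i<N. 0 < p i" and s1: "(\<Sum>i<N. p i) = 1" and pM: "\<forall>i<N. p i \<le> M * d"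
    and d: "0 < d" and M: "0 < M" and Md: "M * d < 1" and W: "0 \<le> W"
  shows "0 \<le> AoI_opt p N (\<lambda>_. 0) - (INF z \<in> sampling_policies W. AoI_opt p N z)"
    and "AoI_opt p N (\<lambda>_. 0) - (INF z \<in> sampling_policies W. AoI_opt p N z)
          \<le> 3/2 * d + real N * d * ((4 + M^3) / (ln 2)^2) / (2 * (- log 2 (M * d)))"
proof -
  define H where "H = ent p N"
  define G where "G = - log 2 (M * d)"
  have G: "0 < G" using Md M d by (simp add: G_def)
  have GH: "G \<le> H" using ent_lower[OF pos s1 pM] by (simp add: G_def H_def)
  have lc: "(\<lambda>i. d - log 2 (p i)) \<in> real_codes N" by (rule code_in[OF pos s1 d])
  have lowz: "3/2 * H \<le> AoI_opt p N z" if "z \<in> sampling_policies W" for z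
    unfolding AoI_opt_def
  proof (rule cINF_greatest)
    show "real_codes N \<noteq> {}" using lc by auto
    fix l assume "l \<in> real_codes N"
    thus "3/2 * H \<le> AoI p N z l" using lower_aoi[OF pos s1 _ that, of l] gibbs[OF pos s1, of l]
      by (simp add: H_def ent_def)
  qed
  have z0: "(\<lambda>_. 0) \<in> sampling_policies W" using W by (rule zero_policy)
  have bdd: "bdd_below (AoI_opt p N ` sampling_policies W)"
    using lowz by (intro bdd_belowI2[where m = "3/2*H"]) auto
  have "(INF z \<in> sampling_policies W. AoI_opt p N z) \<le> AoI_opt p N (\<lambda>_. 0)"
    by (rule cINF_lower[OF bdd z0])
  thus "0 \<le> AoI_opt p N (\<lambda>_. 0) - (INF z \<in> sampling_policies W. AoI_opt p N z)" by simp
  have inf_low: "3/2 * H \<le> (INF z \<in> sampling_policies W. AoI_opt p N z)"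
    using z0 lowz by (intro cINF_greatest) auto
  have bdd2: "bdd_below (AoI p N (\<lambda>_. 0) ` real_codes N)"
    using lower_aoi[OF pos s1 _ z0] gibbs[OF pos s1] by (auto intro!: bdd_belowI2[where m = "3/2*H"] simp: H_def ent_def) (smt (verit))
  have "AoI_opt p N (\<lambda>_. 0) \<le> AoI p N (\<lambda>_. 0) (\<lambda>i. d - log 2 (p i))"
    unfolding AoI_opt_def by (rule cINF_lower[OF bdd2 lc])
  also have "\<dots> \<le> 3/2 * (d + H) + (\<Sum>i<N. p i * (log 2 (p i / d))^2) / (2 * H)"
    using upper_aoi[OF pos s1 d] G GH by (simp add: H_def)
  also have "(\<Sum>i<N. p i * (log 2 (p i / d))^2) / (2 * H) \<le> real N * d * ((4 + M^3) / (ln 2)^2) / (2 * G)"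
  proof -
    have "(\<Sum>i<N. p i * (log 2 (p i / d))^2) \<le> real N * d * ((4 + M^3) / (ln 2)^2)" by (rule V_bound[OF pos pM d])
    moreover have "0 \<le> (\<Sum>i<N. p i * (log 2 (p i / d))^2)" using pos by (intro sum_nonneg) (auto simp: less_imp_le)
    ultimately show ?thesis using G GH by (intro frac_le) auto
  qed
  finally show "AoI_opt p N (\<lambda>_. 0) - (INF z \<in> sampling_policies W. AoI_opt p N z)
          \<le> 3/2 * d + real N * d * ((4 + M^3) / (ln 2)^2) / (2 * (- log 2 (M * d)))"
    using inf_low by (simp add: G_def algebra_simps)
qed


lemma int_pos:
  fixes f :: "real \<Rightarrow> real"
  assumes "lo < y" "y < hi" "0 < f y" and cont: "continuous_on {lo..hi} f" and nn: "\<forall>x. 0 \<le> f x"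
  shows "0 < integral {lo..hi} f"
proof -
  have yin: "y \<in> {lo..hi}" using assms by auto
  obtain e where e: "e > 0" "\<forall>x'\<in>{lo..hi}. dist x' y < e \<longrightarrow> dist (f x') (f y) < f y / 2"
    using cont yin \<open>0 < f y\<close> unfolding continuous_on_iff by (metis half_gt_zero)
  define u where "u = max lo (y - e/2)"
  define v where "v = min hi (y + e/2)"
  have uv: "u < v" using assms e by (simp add: u_def v_def)
  have sub: "{u..v} \<subseteq> {lo..hi}" by (auto simp: u_def v_def)
  have low: "f y / 2 \<le> f x" if "x \<in> {u..v}" for x
  proof -
    have "x \<in> {lo..hi}" using sub that by auto
    moreover have "dist x y < e" using that e by (auto simp: u_def v_def dist_real_def)
    ultimately have "dist (f x) (f y) < f y / 2" using e by auto
    thus ?thesis unfolding dist_real_def by linarith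
  qed
  have i1: "f integrable_on {u..v}" using cont sub by (intro integrable_continuous_interval) (rule continuous_on_subset)
  have i2: "f integrable_on {lo..hi}" using cont by (rule integrable_continuous_interval)
  have "integral {u..v} (\<lambda>_. f y / 2) \<le> integral {u..v} f"
    using low i1 by (intro integral_le) auto
  moreover have "integral {u..v} (\<lambda>_. f y / 2) = (v - u) * (f y / 2)" using uv by simp
  moreover have "0 < (v - u) * (f y / 2)" using uv assms by simp
  moreover have "integral {u..v} f \<le> integral {lo..hi} f"
    using sub i1 i2 nn by (intro integral_subset_le) auto
  ultimately show ?thesis by linarith
qed

lemma cells:
  fixes f :: "real \<Rightarrow> real"
  assumes ab: "a < b"
    and nonneg: "\<forall>x. 0 \<le> f x"
    and pdf: "(f has_integral 1) {a..b}"
    and support: "closure {x. f x \<noteq> 0} = {a..b}"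
    and cont: "continuous_on {a..b} f"
    and Mb: "\<forall>x\<in>{a..b}. f x \<le> M"
    and d: "0 < d"
  shows "\<forall>i<num_cells a b d. 0 < cell_prob f a b d i"
    and "(\<Sum>i<num_cells a b d. cell_prob f a b d i) = 1"
    and "\<forall>i<num_cells a b d. cell_prob f a b d i \<le> M * d"
    and "real (num_cells a b d) * d \<le> b - a + d"
proof -
  define N where "N = num_cells a b d"
  define p where "p = cell_prob f a b d"
  define x where "x = (b - a) / d"
  have x: "0 < x" using ab d by (simp add: x_def)
  have Nx: "real N = of_int \<lceil>x\<rceil>" using x by (simp add: N_def num_cells_def x_def)
  have iN: "a + real i * d < b" if "i < N" for i
  proof -
    have "int i < \<lceil>x\<rceil>" using that x by (simp add: N_def num_cells_def x_def)
    hence "real i < x" by (simp add: less_ceiling_iff)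
    thus ?thesis using d by (simp add: x_def field_simps)
  qed
  have xd: "x * d = b - a" using d by (simp add: x_def)
  have "x * d \<le> real N * d" using Nx le_of_int_ceiling[of x] d by (intro mult_right_mono) auto
  hence Nd1: "b - a \<le> real N * d" using xd by simp
  have "real N * d \<le> (x + 1) * d" using Nx of_int_ceiling_le_add_one[of x] d by (intro mult_right_mono) auto
  hence Nd2: "real N * d \<le> b - a + d" using xd by (simp add: algebra_simps)
  thus "real (num_cells a b d) * d \<le> b - a + d" by (simp add: N_def)
  have intab: "f integrable_on {a..b}" using pdf by (rule has_integral_integrable)
  have intsub: "f integrable_on {u..v}" if "{u..v} \<subseteq> {a..b}" for u v
    using intab that by (rule integrable_on_subinterval)
  have psum: "(\<Sum>i<k. p i) = integral {a..min b (a + real k * d)} f" if "k \<le> N" for k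
    using that
  proof (induction k)
    case 0
    then show ?case using ab by (simp add: min_def)
  next
    case (Suc k)
    hence kN: "k < N" by simp
    have lo: "min b (a + real k * d) = a + real k * d" using iN[OF kN] by simp
    define hi where "hi = min b (a + real (Suc k) * d)"
    have ord: "a \<le> a + real k * d" "a + real k * d \<le> hi" using d iN[OF kN] by (auto simp: hi_def field_simps)
    have "(\<Sum>i<Suc k. p i) = integral {a..a + real k * d} f + integral {a + real k * d..hi} f"
      using Suc lo by (simp add: p_def cell_prob_def hi_def)
    also have "\<dots> = integral {a..hi} f"
    proof (rule Henstock_Kurzweil_Integration.integral_combine[OF ord intsub])
      show "{a..hi} \<subseteq> {a..b}" by (auto simp: hi_def)
    qed
    finally show ?case by (simp add: hi_def)
  qed
  have "min b (a + real N * d) = b" using Nd1 by simp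
  hence "(\<Sum>i<N. p i) = integral {a..b} f" using psum[of N] by simp
  also have "\<dots> = 1" using pdf by (rule integral_unique)
  finally show "(\<Sum>i<num_cells a b d. cell_prob f a b d i) = 1" by (simp add: N_def p_def)
  show "\<forall>i<num_cells a b d. cell_prob f a b d i \<le> M * d"
  proof (intro allI impI)
    fix i assume "i < num_cells a b d"
    hence i: "i < N" by (simp add: N_def)
    define lo where "lo = a + real i * d"
    define hi where "hi = min b (a + real (Suc i) * d)"
    have lh: "lo \<le> hi" "hi - lo \<le> d" "{lo..hi} \<subseteq> {a..b}" using iN[OF i] d by (auto simp: lo_def hi_def field_simps)
    have "integral {lo..hi} f \<le> integral {lo..hi} (\<lambda>_. M)"
      using lh Mb by (intro integral_le intsub) auto
    also have "\<dots> = (hi - lo) * M" using lh by simp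
    also have "\<dots> \<le> d * M"
    proof -
      have "a \<in> {a..b}" using ab by simp
      hence "f a \<le> M" using Mb by blast
      hence "0 \<le> M" using nonneg by (meson order_trans)
      thus ?thesis using lh by (intro mult_right_mono) auto
    qed
    finally show "cell_prob f a b d i \<le> M * d" by (simp add: cell_prob_def lo_def hi_def mult.commute)
  qed
  show "\<forall>i<num_cells a b d. 0 < cell_prob f a b d i"
  proof (intro allI impI)
    fix i assume "i < num_cells a b d"
    hence i: "i < N" by (simp add: N_def)
    define lo where "lo = a + real i * d"
    define hi where "hi = min b (a + real (Suc i) * d)"
    have lh: "lo < hi" "{lo..hi} \<subseteq> {a..b}" using iN[OF i] d by (auto simp: lo_def hi_def field_simps)
    have "(lo + hi) / 2 \<in> closure {x. f x \<noteq> 0}" using support lh by auto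
    hence "\<forall>e>0. \<exists>y\<in>{x. f x \<noteq> 0}. dist y ((lo + hi) / 2) < e" by (simp only: closure_approachable)
    moreover have "(hi - lo) / 2 > 0" using lh by simp
    ultimately obtain y where y: "f y \<noteq> 0" "dist y ((lo + hi) / 2) < (hi - lo) / 2" by blast
    have "\<bar>y - (lo + hi) / 2\<bar> < (hi - lo) / 2" using y(2) by (simp add: dist_real_def)
    hence "lo < y" "y < hi" by (auto simp: abs_less_iff field_simps)
    moreover have "0 < f y" using y nonneg by (metis order_le_less)
    ultimately have "0 < integral {lo..hi} f"
      using cont lh nonneg by (intro int_pos[of lo y hi]) (auto intro: continuous_on_subset)
    thus "0 < cell_prob f a b d i" by (simp add: cell_prob_def lo_def hi_def)
  qed
qed


theorem theorem4:
  fixes f :: "real \<Rightarrow> real" and a b W :: real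
  assumes ab: "a < b"
    and nonneg: "\<forall>x. 0 \<le> f x"
    and pdf: "(f has_integral 1) {a..b}"
    and support: "closure {x. f x \<noteq> 0} = {a..b}"
    and cont: "continuous_on {a..b} f"
    and diff: "f differentiable_on {a..b}"
    and B1: "(\<lambda>x. f x * (log 2 (f x))\<^sup>2) integrable_on {a..b}"
    and B2: "(\<lambda>x. f x * log 2 (f x)) integrable_on {a..b}"
    and W: "0 \<le> W"
  shows "((\<lambda>d. AoI_uni f a b d (\<lambda>_. 0)
              - (INF z \<in> sampling_policies W. AoI_uni f a b d z)) \<longlongrightarrow> 0) (at_right 0)"
proof -
  have "bounded (f ` {a..b})" using compact_continuous_image[OF cont compact_Icc] by (rule compact_imp_bounded)
  then obtain B where B: "B > 0" "\<forall>y\<in>f ` {a..b}. norm y \<le> B" unfolding bounded_pos by blast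
  have Mb: "\<forall>x\<in>{a..b}. f x \<le> B" using B(2) by force
  define K where "K = (4 + B^3) / (ln 2)^2"
  have K: "0 \<le> K" using B by (simp add: K_def)
  define h where "h = (\<lambda>d::real. 3/2 * d + (b - a + d) * K / (2 * (- log 2 (B * d))))"
  have h: "(h \<longlongrightarrow> 0) (at_right 0)" using B(1) unfolding h_def by real_asymp
  define D where "D = (\<lambda>d. AoI_uni f a b d (\<lambda>_. 0)
              - (INF z \<in> sampling_policies W. AoI_uni f a b d z))"
  have ev: "eventually (\<lambda>d. d \<in> {0<..<1/B}) (at_right 0)" using B by (intro eventually_at_right_real) simp
  have bnd: "0 \<le> D d \<and> D d \<le> h d" if "d \<in> {0<..<1/B}" for d
  proof -
    have d: "0 < d" and Bd: "B * d < 1" using that B by (auto simp: field_simps)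
    note c = cells[OF ab nonneg pdf support cont Mb d]
    note ab1 = abstract[OF c(1) c(2) c(3) d B(1) Bd W]
    have G: "0 < - log 2 (B * d)" using B d Bd by simp
    have "real (num_cells a b d) * d * K / (2 * (- log 2 (B * d))) \<le> (b - a + d) * K / (2 * (- log 2 (B * d)))"
      using c(4) K G by (intro divide_right_mono mult_right_mono) auto
    thus ?thesis using ab1 by (simp add: D_def h_def AoI_uni_def K_def)
  qed
  have "(D \<longlongrightarrow> 0) (at_right 0)"
  proof (rule tendsto_sandwich[OF _ _ tendsto_const h])
    show "eventually (\<lambda>d. 0 \<le> D d) (at_right 0)" using ev bnd by (auto elim: eventually_mono)
    show "eventually (\<lambda>d. D d \<le> h d) (at_right 0)" using ev bnd by (auto elim: eventually_mono)
  qed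
  thus ?thesis by (simp add: D_def)
qed

end
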